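(* Let $Z=\prod_{c=1}^C Z_c$ with each $Z_c$ finite, let $Z^{\text{train}}\subseteq Z$, and let $z\mapsto x(z)$ be a representation whose kernel $K$ is compositionally structured. Let $f$ be a kernel model of the form $f(x)=\sum_{z^{\text{tr}}\in Z^{\text{train}}} a_{z^{\text{tr}}}K(x,x(z^{\text{tr}}))$ with arbitrary real coefficients $a_{z^{\text{tr}}}$. For $z\in Z$ define $$\mathrm{Conj}(z\mid Z^{\text{train}}):=\{J\subseteq\{1,\dots,C\}:\ \text{there is } z^{\text{tr}}\in Z^{\text{train}} \text{ with } z_c=z^{\text{tr}}_c \text{ for all } c\in J\}.$$ Then there exist functions $f_J:\prod_{c\in J}Z_c\to\mathbb{R}$, for $J\subseteq\{1,\dots,C\}$, such that for every input $x$ representing any $z\in Z$, $$f(x)=\sum_{J\in\mathrm{Conj}(z\mid Z^{\text{train}})} f_J(z_J),\qquad z_J:=(z_c)_{c\in J}.$$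
   Context: A representation $z\mapsto x(z)\in\mathbb{R}^d$ (or more generally a feature map with kernel $K(x,x')=\phi(x)^T\phi(x')$) is compositionally structured iff $K(x(z),x(z'))$ depends only on the number of components $c$ with $z_c=z'_c$. A kernel model trained on inputs representing $Z^{\text{train}}$ is written in dual form as a linear combination of the kernel evaluated against the training inputs. *)

theory Defs
  imports "HOL-Analysis.Analysis"
begin

definition prodspace :: "nat \<Rightarrow> (nat \<Rightarrow> 'a set) \<Rightarrow> (nat \<Rightarrow> 'a) set" where
  "prodspace C Zc = PiE {1..C} Zc"

definition comp_structured ::
  "nat \<Rightarrow> (nat \<Rightarrow> 'a set) \<Rightarrow> ((nat \<Rightarrow> 'a) \<Rightarrow> 'v) \<Rightarrow> ('v \<Rightarrow> 'v \<Rightarrow> real) \<Rightarrow> bool" where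
  "comp_structured C Zc x K \<longleftrightarrow>
     (\<exists>\<kappa> :: nat \<Rightarrow> real. \<forall>z\<in>prodspace C Zc. \<forall>z'\<in>prodspace C Zc.
        K (x z) (x z') = \<kappa> (card {c\<in>{1..C}. z c = z' c}))"

definition Conj :: "nat \<Rightarrow> (nat \<Rightarrow> 'a) \<Rightarrow> (nat \<Rightarrow> 'a) set \<Rightarrow> nat set set" where
  "Conj C z Ztrain = {J. J \<subseteq> {1..C} \<and> (\<exists>ztr\<in>Ztrain. \<forall>c\<in>J. z c = ztr c)}"

end

theory Submission
  imports Defs
begin

lemma exists_g:
  fixes \<kappa> :: "nat \<Rightarrow> real"
  shows "\<exists>g. \<forall>n\<le>N. \<kappa> n = (\<Sum>k\<le>n. real (n choose k) * g k)"
proof (induction N)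
  case 0
  then show ?case by (rule exI[of _ "\<lambda>_. \<kappa> 0"]) simp
next
  case (Suc N)
  then obtain g where g: "\<forall>n\<le>N. \<kappa> n = (\<Sum>k\<le>n. real (n choose k) * g k)" by blast
  define g' where "g' = g(Suc N := \<kappa> (Suc N) - (\<Sum>k\<le>N. real (Suc N choose k) * g k))"
  have "\<forall>n\<le>Suc N. \<kappa> n = (\<Sum>k\<le>n. real (n choose k) * g' k)"
  proof (intro allI impI)
    fix n assume n: "n \<le> Suc N"
    show "\<kappa> n = (\<Sum>k\<le>n. real (n choose k) * g' k)"
    proof (cases "n = Suc N")
      case True
      have "(\<Sum>k\<le>n. real (n choose k) * g' k)
          = (\<Sum>k\<le>N. real (Suc N choose k) * g' k) + g' (Suc N)"
        using True by simp
      also have "(\<Sum>k\<le>N. real (Suc N choose k) * g' k) = (\<Sum>k\<le>N. real (Suc N choose k) * g k)"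
        by (rule sum.cong) (auto simp: g'_def)
      finally show ?thesis using True by (simp add: g'_def)
    next
      case False
      then have "n \<le> N" using n by simp
      then have "(\<Sum>k\<le>n. real (n choose k) * g' k) = (\<Sum>k\<le>n. real (n choose k) * g k)"
        by (intro sum.cong) (auto simp: g'_def)
      then show ?thesis using g \<open>n \<le> N\<close> by simp
    qed
  qed
  then show ?case by blast
qed

lemma sum_pow_card:
  assumes "finite S"
  shows "(\<Sum>J\<in>Pow S. g (card J)) = (\<Sum>k\<le>card S. real (card S choose k) * g k)"
proof -
  have "(\<Sum>J\<in>Pow S. g (card J)) = (\<Sum>k\<le>card S. \<Sum>J\<in>{J. J \<in> Pow S \<and> card J = k}. g (card J))"
    by (rule sum.group[symmetric]) (use assms card_mono in auto)
  also have "\<dots> = (\<Sum>k\<le>card S. real (card S choose k) * g k)"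
  proof (rule sum.cong)
    fix k assume "k \<in> {..card S}"
    have "(\<Sum>J\<in>{J. J \<in> Pow S \<and> card J = k}. g (card J)) = (\<Sum>J\<in>{J. J \<in> Pow S \<and> card J = k}. g k)"
      by (rule sum.cong) auto
    also have "\<dots> = real (card {J. J \<subseteq> S \<and> card J = k}) * g k" by simp
    also have "\<dots> = real (card S choose k) * g k" using n_subsets[OF assms] by simp
    finally show "(\<Sum>J\<in>{J. J \<in> Pow S \<and> card J = k}. g (card J)) = real (card S choose k) * g k" .
  qed simp
  finally show ?thesis .
qed

theorem theorem1:
  fixes C :: nat
    and Zc :: "nat \<Rightarrow> 'a set"
    and Ztrain :: "(nat \<Rightarrow> 'a) set"
    and x :: "(nat \<Rightarrow> 'a) \<Rightarrow> 'v"
    and K :: "'v \<Rightarrow> 'v \<Rightarrow> real"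
    and a :: "(nat \<Rightarrow> 'a) \<Rightarrow> real"
    and f :: "'v \<Rightarrow> real"
  assumes fin: "\<And>c. c \<in> {1..C} \<Longrightarrow> finite (Zc c)"
    and train: "Ztrain \<subseteq> prodspace C Zc"
    and cs: "comp_structured C Zc x K"
    and fdef: "\<And>v. f v = (\<Sum>ztr\<in>Ztrain. a ztr * K v (x ztr))"
  shows "\<exists>fJ :: nat set \<Rightarrow> (nat \<Rightarrow> 'a) \<Rightarrow> real.
           \<forall>z\<in>prodspace C Zc.
             f (x z) = (\<Sum>J\<in>Conj C z Ztrain. fJ J (restrict z J))"
proof -
  obtain \<kappa> :: "nat \<Rightarrow> real" where kap: "\<And>z z'. z\<in>prodspace C Zc \<Longrightarrow> z'\<in>prodspace C Zc \<Longrightarrow>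
        K (x z) (x z') = \<kappa> (card {c\<in>{1..C}. z c = z' c})"
    using cs unfolding comp_structured_def by blast
  obtain g where g: "\<forall>n\<le>C. \<kappa> n = (\<Sum>k\<le>n. real (n choose k) * g k)"
    using exists_g by blast
  have finT: "finite Ztrain"
    using train unfolding prodspace_def by (rule finite_subset) (intro finite_PiE; use fin in auto)
  define fJ where "fJ J w = g (card J) * (\<Sum>ztr\<in>Ztrain. if (\<forall>c\<in>J. w c = ztr c) then a ztr else 0)"
    for J :: "nat set" and w :: "nat \<Rightarrow> 'a"
  have "f (x z) = (\<Sum>J\<in>Conj C z Ztrain. fJ J (restrict z J))" if z: "z \<in> prodspace C Zc" for z
  proof -
    define A where "A ztr = {c\<in>{1..C}. z c = ztr c}" for ztr
    have cardA: "card (A ztr) \<le> C" for ztr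
      by (metis (no_types, lifting) A_def card_atLeastAtMost card_mono diff_Suc_1 finite_atLeastAtMost mem_Collect_eq subsetI)
    have "f (x z) = (\<Sum>ztr\<in>Ztrain. a ztr * (\<Sum>J\<in>Pow (A ztr). g (card J)))"
      unfolding fdef
    proof (rule sum.cong)
      fix ztr assume "ztr \<in> Ztrain"
      then have "K (x z) (x ztr) = \<kappa> (card (A ztr))" using kap z train A_def by auto
      also have "\<dots> = (\<Sum>J\<in>Pow (A ztr). g (card J))"
        using g cardA sum_pow_card[of "A ztr" g] by (simp add: A_def)
      finally show "a ztr * K (x z) (x ztr) = a ztr * (\<Sum>J\<in>Pow (A ztr). g (card J))" by simp
    qed simp
    also have "\<dots> = (\<Sum>ztr\<in>Ztrain. \<Sum>J\<in>Pow {1..C}. if J \<subseteq> A ztr then a ztr * g (card J) else 0)"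
    proof (rule sum.cong)
      fix ztr
      have "(\<Sum>J\<in>Pow {1..C}. if J \<subseteq> A ztr then a ztr * g (card J) else 0)
          = (\<Sum>J\<in>Pow (A ztr). a ztr * g (card J))"
        by (rule sum.mono_neutral_cong_right) (auto simp: A_def)
      then show "a ztr * (\<Sum>J\<in>Pow (A ztr). g (card J)) = (\<Sum>J\<in>Pow {1..C}. if J \<subseteq> A ztr then a ztr * g (card J) else 0)"
        by (simp add: sum_distrib_left)
    qed simp
    also have "\<dots> = (\<Sum>J\<in>Pow {1..C}. \<Sum>ztr\<in>Ztrain. if J \<subseteq> A ztr then a ztr * g (card J) else 0)"
      by (rule sum.swap)
    also have "\<dots> = (\<Sum>J\<in>Pow {1..C}. fJ J (restrict z J))"
    proof (rule sum.cong)
      fix J assume J: "J \<in> Pow {1..C}"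
      show "(\<Sum>ztr\<in>Ztrain. if J \<subseteq> A ztr then a ztr * g (card J) else 0) = fJ J (restrict z J)"
        unfolding fJ_def sum_distrib_left
        by (rule sum.cong) (use J in \<open>auto simp: A_def\<close>)
    qed simp
    also have "\<dots> = (\<Sum>J\<in>Conj C z Ztrain. fJ J (restrict z J))"
    proof (rule sum.mono_neutral_right)
      show "Conj C z Ztrain \<subseteq> Pow {1..C}" by (auto simp: Conj_def)
      show "\<forall>J\<in>Pow {1..C} - Conj C z Ztrain. fJ J (restrict z J) = 0"
        by (auto simp: Conj_def fJ_def intro!: sum.neutral split: if_splits)
    qed simp
    finally show ?thesis .
  qed
  then show ?thesis by blast
qed

end
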